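(* Let $a,b,c\in\mathbb C$ with $c=a-b+1$. If $a$ is a negative integer, assume $c\notin\{a,a+1,\dots,0,1\}$; otherwise assume $2-c\notin\{1,2,3,\dots\}$. Set \[ f(z)=F(a,b+1;c+1;z),\quad g(z)=F(a,b-1;c-1;z),\quad h(z)=F(a,b;c;z). \] Then \[ z\big(f(z)g'(z)-f'(z)g(z)\big)=c\big(f(z)g(z)-h(z)^2\big) \] for all $z\in\mathbb C$ when $a$ is a negative integer, and for all $z\in\mathbb D$ otherwise.
   Context: The hypergeometric function is $F(a,b;c;z)=\sum_{k\ge0}\frac{(a)_k(b)_k}{(c)_k}\frac{z^k}{k!}$, where $(x)_0=1$ and $(x)_k=x(x+1)\cdots(x+k-1)$. It is defined for $|z|<1$ when $1-c\notin\{1,2,\dots\}$; when $a=-n$ with $n\in\mathbb N$ the series terminates at $k=n$ and defines a polynomial for all $z\in\mathbb C$ whenever $c\notin\{0,-1,\dots,1-n\}$. $\mathbb D=\{|z|<1\}$. *)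

theory Defs
  imports "HOL-Analysis.Analysis"
begin

text \<open>As an infinite sum; in the terminating case (a = -n) all terms with k > n vanish,
  so it equals the polynomial for every z.\<close>
definition hyp2F1 :: "complex \<Rightarrow> complex \<Rightarrow> complex \<Rightarrow> complex \<Rightarrow> complex" where
  "hyp2F1 a b c z =
     (\<Sum>k. pochhammer a k * pochhammer b k / pochhammer c k * z ^ k / fact k)"

end

theory Submission
  imports Defs "HOL-Computational_Algebra.Formal_Power_Series"
begin

definition coef :: "complex \<Rightarrow> complex \<Rightarrow> complex \<Rightarrow> nat \<Rightarrow> complex" where
  "coef a b c k = pochhammer a k * pochhammer b k / pochhammer c k / fact k"

definition nd :: "complex \<Rightarrow> complex \<Rightarrow> bool" where
  "nd a c \<longleftrightarrow> (\<forall>k. c + of_nat k = 0 \<longrightarrow> pochhammer a (Suc k) = 0)"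

lemma coef_zero: "pochhammer a k = 0 \<Longrightarrow> coef a b c k = 0"
  by (simp add: coef_def)

lemma coef_rec:
  assumes "nd a c"
  shows "coef a b c (Suc k) * ((c + of_nat k) * of_nat (Suc k))
       = coef a b c k * ((a + of_nat k) * (b + of_nat k))"
proof (cases "pochhammer c k = 0")
  case True
  then obtain j where j: "j < k" "c = - of_nat j" by (auto simp: pochhammer_eq_0_iff)
  then have "pochhammer a (Suc j) = 0" using assms by (auto simp: nd_def)
  then have "pochhammer a k = 0" "pochhammer a (Suc k) = 0"
    using j pochhammer_eq_0_mono by (metis Suc_leI, metis Suc_leI le_SucI)
  then show ?thesis by (simp add: coef_def)
next
  case False
  show ?thesis
  proof (cases "c + of_nat k = 0")
    case True
    then have "pochhammer a (Suc k) = 0" using assms by (auto simp: nd_def)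
    then have "pochhammer a k * (a + of_nat k) = 0" by (simp add: pochhammer_Suc)
    then show ?thesis using True by (auto simp add: coef_def)
  next
    case False2: False
    have "pochhammer c (Suc k) \<noteq> 0" using False False2 by (simp add: pochhammer_Suc)
    have n1: "of_nat (Suc k) \<noteq> (0::complex)" by (simp only: of_nat_eq_0_iff nat.simps not_False_eq_True)
    have "coef a b c (Suc k) = coef a b c k * ((a + of_nat k) * (b + of_nat k)) / ((c + of_nat k) * of_nat (Suc k))"
      unfolding coef_def pochhammer_Suc fact_Suc using False False2 n1
      by (simp add: field_simps)
    then show ?thesis using False2 n1 by simp
  qed
qed

lemma seq_uniq:
  fixes s t :: "nat \<Rightarrow> complex"
  assumes rs: "\<And>k. s (Suc k) * ((c + of_nat k) * of_nat (Suc k)) = s k * ((a + of_nat k) * (b + of_nat k))"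
    and rt: "\<And>k. t (Suc k) * ((c + of_nat k) * of_nat (Suc k)) = t k * ((a + of_nat k) * (b + of_nat k))"
    and zs: "\<And>k. pochhammer a k = 0 \<Longrightarrow> s k = 0"
    and zt: "\<And>k. pochhammer a k = 0 \<Longrightarrow> t k = 0"
    and s0: "s 0 = t 0" and ndc: "nd a c"
  shows "s k = t k"
proof (induction k)
  case 0 then show ?case using s0 by simp
next
  case (Suc k)
  show ?case
  proof (cases "c + of_nat k = 0")
    case True
    then have "pochhammer a (Suc k) = 0" using ndc by (auto simp: nd_def)
    then show ?thesis using zs zt by simp
  next
    case False
    have "of_nat (Suc k) \<noteq> (0::complex)" by (simp only: of_nat_eq_0_iff nat.simps not_False_eq_True)
    then have nz: "(c + of_nat k) * of_nat (Suc k) \<noteq> 0" using False by simp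
    have "s (Suc k) * ((c + of_nat k) * of_nat (Suc k)) = t (Suc k) * ((c + of_nat k) * of_nat (Suc k))"
      using rs rt Suc by simp
    then show ?thesis using nz by simp
  qed
qed

definition HF :: "complex \<Rightarrow> complex \<Rightarrow> complex \<Rightarrow> complex fps" where
  "HF a b c = Abs_fps (coef a b c)"

lemma ofnat_Suc_nz: "of_nat (Suc k) \<noteq> (0::complex)"
  by (simp only: of_nat_eq_0_iff nat.simps not_False_eq_True)

lemma coef_0 [simp]: "coef a b c 0 = 1"
  by (simp add: coef_def)

lemma relB:
  assumes c0: "c \<noteq> 0" and nd0: "nd a c" and nd1: "nd a (c+1)"
  shows "fps_const c * HF a b c = (fps_const c - fps_const a * fps_X) * HF a (b+1) (c+1)
           + fps_X * (1 - fps_X) * fps_deriv (HF a (b+1) (c+1))"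
proof -
  define f where "f = coef a (b+1) (c+1)"
  define e where "e k = (c + of_nat k) * f k - (if k = 0 then 0 else (a + of_nat (k-1)) * f (k-1))" for k
  have frec: "f (Suc k) * ((c + 1 + of_nat k) * of_nat (Suc k)) = f k * ((a + of_nat k) * (b + 1 + of_nat k))" for k
    unfolding f_def by (rule coef_rec[OF nd1])
  have rhs: "fps_nth ((fps_const c - fps_const a * fps_X) * HF a (b+1) (c+1)
           + fps_X * (1 - fps_X) * fps_deriv (HF a (b+1) (c+1))) k = e k" for k
  proof (cases k)
    case 0 then show ?thesis by (simp add: e_def f_def HF_def algebra_simps)
  next
    case (Suc m)
    then show ?thesis
      by (cases m) (simp_all add: e_def f_def HF_def algebra_simps)
  qed
  have A: "e (Suc k) * of_nat (Suc k) = b * (a + of_nat k) * f k" for k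
  proof -
    have "e (Suc k) * of_nat (Suc k) = (c + 1 + of_nat k) * of_nat (Suc k) * f (Suc k) - (a + of_nat k) * of_nat (Suc k) * f k"
      by (simp add: e_def algebra_simps)
    also have "\<dots> = f k * ((a + of_nat k) * (b + 1 + of_nat k)) - (a + of_nat k) * of_nat (Suc k) * f k"
      using frec[of k] by (simp add: algebra_simps)
    also have "\<dots> = b * (a + of_nat k) * f k" by (simp add: algebra_simps)
    finally show ?thesis .
  qed
  have B: "e k * (b + of_nat k) = b * (c + of_nat k) * f k" for k
  proof (cases k)
    case 0 then show ?thesis by (simp add: e_def f_def)
  next
    case (Suc m)
    have "e k * (b + of_nat k) = (c + 1 + of_nat m) * (b + 1 + of_nat m) * f (Suc m) - f m * ((a + of_nat m) * (b + 1 + of_nat m))"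
      using Suc by (simp add: e_def algebra_simps)
    also have "\<dots> = (c + 1 + of_nat m) * (b + 1 + of_nat m) * f (Suc m) - f (Suc m) * ((c + 1 + of_nat m) * of_nat (Suc m))"
      using frec[of m] by simp
    also have "\<dots> = b * (c + of_nat k) * f k" using Suc by (simp add: algebra_simps)
    finally show ?thesis .
  qed
  have erec: "e (Suc k) * ((c + of_nat k) * of_nat (Suc k)) = e k * ((a + of_nat k) * (b + of_nat k))" for k
  proof -
    have "e (Suc k) * ((c + of_nat k) * of_nat (Suc k)) = (c + of_nat k) * (e (Suc k) * of_nat (Suc k))"
      by (simp add: algebra_simps)
    also have "\<dots> = (a + of_nat k) * (e k * (b + of_nat k))" unfolding A B by (simp add: algebra_simps)
    finally show ?thesis by (simp add: algebra_simps)
  qed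
  have ez: "e k = 0" if "pochhammer a k = 0" for k
  proof (cases k)
    case 0 then show ?thesis using that by simp
  next
    case (Suc m)
    then have "pochhammer a m * (a + of_nat m) = 0" using that by (simp add: pochhammer_Suc)
    then have "(a + of_nat m) * f m = 0" by (auto simp: f_def coef_def)
    moreover have "f k = 0" using that by (simp add: f_def coef_zero)
    ultimately show ?thesis using Suc by (simp add: e_def)
  qed
  have eq: "e k = c * coef a b c k" for k
  proof (rule seq_uniq[OF erec _ ez _ _ nd0])
    show "c * coef a b c (Suc k) * ((c + of_nat k) * of_nat (Suc k)) = c * coef a b c k * ((a + of_nat k) * (b + of_nat k))" for k
      using arg_cong[OF coef_rec[OF nd0, of b k], of "\<lambda>x. c * x"] by (simp only: mult.assoc)
    show "c * coef a b c k = 0" if "pochhammer a k = 0" for k using that by (simp add: coef_zero)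
    show "e 0 = c * coef a b c 0" by (simp add: e_def f_def)
  qed
  show ?thesis
  proof (rule fps_ext)
    fix n
    show "fps_nth (fps_const c * HF a b c) n = fps_nth ((fps_const c - fps_const a * fps_X) * HF a (b+1) (c+1)
           + fps_X * (1 - fps_X) * fps_deriv (HF a (b+1) (c+1))) n"
      unfolding rhs eq by (simp add: HF_def)
  qed
qed

lemma hyp_ode:
  assumes nd0: "nd a c"
  shows "fps_X * (1 - fps_X) * fps_deriv (fps_deriv (HF a b c))
     = fps_const (a*b) * HF a b c - (fps_const c - fps_const (a+b+1) * fps_X) * fps_deriv (HF a b c)"
proof (rule fps_ext)
  fix k
  define f where "f = coef a b c"
  have frec: "f (Suc k) * ((c + of_nat k) * of_nat (Suc k)) = f k * ((a + of_nat k) * (b + of_nat k))"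
    unfolding f_def by (rule coef_rec[OF nd0])
  have l: "fps_nth (fps_X * (1 - fps_X) * fps_deriv (fps_deriv (HF a b c))) k = of_nat k * of_nat (Suc k) * f (Suc k) - (of_nat k - 1) * of_nat k * f k"
  proof (cases k)
    case 0 then show ?thesis by (simp add: f_def HF_def)
  next
    case (Suc m) then show ?thesis by (cases m) (simp_all add: f_def HF_def algebra_simps)
  qed
  have r: "fps_nth (fps_const (a*b) * HF a b c - (fps_const c - fps_const (a+b+1) * fps_X) * fps_deriv (HF a b c)) k
     = a * b * f k - c * of_nat (Suc k) * f (Suc k) + (a+b+1) * of_nat k * f k"
  proof (cases k)
    case 0 then show ?thesis by (simp add: f_def HF_def)
  next
    case (Suc m) then show ?thesis by (simp add: f_def HF_def algebra_simps)
  qed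
  show "fps_nth (fps_X * (1 - fps_X) * fps_deriv (fps_deriv (HF a b c))) k = fps_nth (fps_const (a*b) * HF a b c - (fps_const c - fps_const (a+b+1) * fps_X) * fps_deriv (HF a b c)) k"
    unfolding l r using frec by (simp add: algebra_simps)
qed

lemma alg:
  fixes F F1 F2 H H1 H2 G G1 X a b c :: "'a::comm_ring_1"
  assumes hb: "b = a - c + 1"
   and h1: "c*H = (c - a*X)*F + X*(1-X)*F1"
   and hH1: "c*H1 = b*(a*F + X*F1)"
   and hH2: "c*H2 = b*((a+1)*F1 + X*F2)"
   and h2: "(c-1)*G = (c-1-a*X)*H + X*(1-X)*H1"
   and h2': "(c-1)*G1 = -a*H + (c-1-a*X)*H1 + (1-X-X)*H1 + X*(1-X)*H2"
   and ode: "X*(1-X)*F2 = a*(b+1)*F - (c+1 - (a+(b+1)+1)*X)*F1"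
  shows "c*(c-1)*(X*(F*G1 - F1*G)) = c*(c-1)*(c*(F*G - H*H))"
proof -
  have q1: "c*(c-1)*G1 = -a*((c - a*X)*F + X*(1-X)*F1) + (c-(a+2)*X)*(b*(a*F + X*F1))
       + b*(a+1)*X*(1-X)*F1 + b*X*(a*(b+1)*F - (c+1 - (a+(b+1)+1)*X)*F1)"
  proof -
    have "c*(c-1)*G1 = c*((c-1)*G1)" by (simp add: algebra_simps)
    also have "\<dots> = -a*(c*H) + (c-(a+2)*X)*(c*H1) + X*(1-X)*(c*H2)"
      unfolding h2' by (simp add: algebra_simps)
    also have "\<dots> = -a*((c - a*X)*F + X*(1-X)*F1) + (c-(a+2)*X)*(b*(a*F + X*F1)) + X*(1-X)*(b*((a+1)*F1 + X*F2))"
      by (simp only: h1 hH1 hH2)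
    also have "\<dots> = -a*((c - a*X)*F + X*(1-X)*F1) + (c-(a+2)*X)*(b*(a*F + X*F1))
       + b*(a+1)*X*(1-X)*F1 + b*X*(X*(1-X)*F2)"
      by (simp add: algebra_simps)
    also have "\<dots> = -a*((c - a*X)*F + X*(1-X)*F1) + (c-(a+2)*X)*(b*(a*F + X*F1))
       + b*(a+1)*X*(1-X)*F1 + b*X*(a*(b+1)*F - (c+1 - (a+(b+1)+1)*X)*F1)"
      by (simp only: ode)
    finally show ?thesis .
  qed
  have q0: "c*(c-1)*G = (c-1-a*X)*((c - a*X)*F + X*(1-X)*F1) + X*(1-X)*(b*(a*F + X*F1))"
  proof -
    have "c*(c-1)*G = c*((c-1)*G)" by (simp add: algebra_simps)
    also have "\<dots> = (c-1-a*X)*(c*H) + X*(1-X)*(c*H1)"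
      unfolding h2 by (simp add: algebra_simps)
    also have "\<dots> = (c-1-a*X)*((c - a*X)*F + X*(1-X)*F1) + X*(1-X)*(b*(a*F + X*F1))"
      by (simp only: h1 hH1)
    finally show ?thesis .
  qed
  have "c*(c-1)*(X*(F*G1 - F1*G)) = X*(F*(c*(c-1)*G1) - F1*(c*(c-1)*G))"
    by (simp add: algebra_simps)
  also have "\<dots> = c*F*(c*(c-1)*G) - (c-1)*(c*H)^2"
    unfolding q0 q1 h1 hb by (simp add: algebra_simps power2_eq_square)
  also have "\<dots> = c*(c-1)*(c*(F*G - H*H))"
    by (simp add: algebra_simps power2_eq_square)
  finally show ?thesis .
qed

lemma algH1:
  fixes F F1 F2 H1 X a b c :: "'a::comm_ring_1"
  assumes hb: "b = a - c + 1"
   and h1d: "c*H1 = -a*F + (c - a*X)*F1 + (1-X-X)*F1 + X*(1-X)*F2"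
   and ode: "X*(1-X)*F2 = a*(b+1)*F - (c+1 - (a+(b+1)+1)*X)*F1"
  shows "c*H1 = b*(a*F + X*F1)"
proof -
  have "c*H1 = -a*F + (c - a*X)*F1 + (1-X-X)*F1 + (a*(b+1)*F - (c+1 - (a+(b+1)+1)*X)*F1)"
    unfolding h1d ode ..
  also have "\<dots> = b*(a*F + X*F1)" by (simp add: algebra_simps)
  finally show ?thesis .
qed

lemma fps_main:
  assumes c0: "c \<noteq> 0" and c1: "c \<noteq> 1" and ndm: "nd a (c-1)" and nd0: "nd a c" and ndp: "nd a (c+1)"
    and hb: "b = a - c + 1"
  shows "fps_X * (HF a (b+1) (c+1) * fps_deriv (HF a (b-1) (c-1)) - fps_deriv (HF a (b+1) (c+1)) * HF a (b-1) (c-1))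
       = fps_const c * (HF a (b+1) (c+1) * HF a (b-1) (c-1) - (HF a b c)^2)"
proof -
  define F where "F = HF a (b+1) (c+1)"
  define G where "G = HF a (b-1) (c-1)"
  define H where "H = HF a b c"
  define A where "A = (fps_const a :: complex fps)"
  define B where "B = (fps_const b :: complex fps)"
  define C where "C = (fps_const c :: complex fps)"
  define X where "X = (fps_X :: complex fps)"
  have h1: "C*H = (C - A*X)*F + X*(1-X)*fps_deriv F"
    using relB[OF c0 nd0 ndp, of b] unfolding A_def C_def X_def F_def H_def .
  have h2: "(C-1)*G = (C-1-A*X)*H + X*(1-X)*fps_deriv H"
  proof -
    have cm: "c - 1 \<noteq> 0" using c1 by simp
    have e: "fps_const (c-1) = fps_const c - (1::complex fps)" by (metis fps_const_1_eq_1 fps_const_sub)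
    from relB[OF cm ndm, of "b-1"] ndm nd0
    show ?thesis unfolding A_def C_def X_def G_def H_def e by simp
  qed
  have ode: "X*(1-X)*fps_deriv (fps_deriv F) = A*(B+1)*F - (C+1 - (A+(B+1)+1)*X)*fps_deriv F"
  proof -
    have e1: "fps_const (a*(b+1)) = A*(B+1)" unfolding A_def B_def by (metis fps_const_1_eq_1 fps_const_add fps_const_mult)
    have e2: "fps_const (c+1) = C+1" unfolding C_def by (metis fps_const_1_eq_1 fps_const_add)
    have e3: "fps_const (a+(b+1)+1) = A+(B+1)+1" unfolding A_def B_def by (metis fps_const_1_eq_1 fps_const_add)
    show ?thesis using hyp_ode[OF ndp, of "b+1"] unfolding e1 e2 e3 X_def F_def .
  qed
  have dA: "fps_deriv A = 0" "fps_deriv B = 0" "fps_deriv C = 0" "fps_deriv X = 1"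
    unfolding A_def B_def C_def X_def by simp_all
  have h1d: "C*fps_deriv H = -A*F + (C - A*X)*fps_deriv F + (1-X-X)*fps_deriv F + X*(1-X)*fps_deriv (fps_deriv F)"
    using arg_cong[OF h1, of fps_deriv] by (simp add: dA algebra_simps)
  have hb': "B = A - C + 1" using hb unfolding A_def B_def C_def by simp
  have hH1: "C*fps_deriv H = B*(A*F + X*fps_deriv F)"
    by (rule algH1[OF hb' h1d ode])
  have hH2: "C*fps_deriv (fps_deriv H) = B*((A+1)*fps_deriv F + X*fps_deriv (fps_deriv F))"
    using arg_cong[OF hH1, of fps_deriv] by (simp add: dA algebra_simps)
  have h2d: "(C-1)*fps_deriv G = -A*H + (C-1-A*X)*fps_deriv H + (1-X-X)*fps_deriv H + X*(1-X)*fps_deriv (fps_deriv H)"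
    using arg_cong[OF h2, of fps_deriv] by (simp add: dA algebra_simps)
  have "C*(C-1)*(X*(F*fps_deriv G - fps_deriv F*G)) = C*(C-1)*(C*(F*G - H*H))"
    by (rule alg[OF hb' h1 hH1 hH2 h2 h2d ode])
  moreover have "C*(C-1) \<noteq> 0" using c0 c1 unfolding C_def by simp
  ultimately have "X*(F*fps_deriv G - fps_deriv F*G) = C*(F*G - H*H)" by simp
  then show ?thesis unfolding F_def G_def H_def C_def X_def by (simp add: power2_eq_square)
qed

lemma hyp_eval: "hyp2F1 a b c = eval_fps (HF a b c)"
proof
  fix z
  show "hyp2F1 a b c z = eval_fps (HF a b c) z"
    unfolding hyp2F1_def eval_fps_def HF_def coef_def fps_nth_Abs_fps
    by (simp add: field_simps)
qed

lemma radius_term: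
  assumes "\<And>k. k > n \<Longrightarrow> pochhammer a k = 0"
  shows "fps_conv_radius (HF a b c) = \<infinity>"
proof -
  have "eventually (\<lambda>k. coef a b c k = 0) sequentially"
    unfolding eventually_sequentially
    by (intro exI[of _ "Suc n"] allI impI coef_zero assms) simp
  then have "conv_radius (coef a b c) = conv_radius (\<lambda>_. 0::complex)"
    by (rule conv_radius_cong')
  then show ?thesis by (simp add: fps_conv_radius_def HF_def)
qed

lemma ratio_lim:
  fixes a b c :: complex
  shows "(\<lambda>n. norm ((a + of_nat n) * (b + of_nat n) / ((c + of_nat n) * of_nat (Suc n)))) \<longlonglongrightarrow> 1"
proof -
  have "(\<lambda>n. ((1 + a / of_nat n) * (1 + b / of_nat n)) / ((1 + c / of_nat n) * (1 + 1 / of_nat n))) \<longlonglongrightarrow>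
        ((1 + 0) * (1 + 0)) / ((1 + 0) * (1 + 0))"
    by (intro tendsto_intros) auto
  then have l: "(\<lambda>n. ((1 + a / of_nat n) * (1 + b / of_nat n)) / ((1 + c / of_nat n) * (1 + 1 / of_nat n))) \<longlonglongrightarrow> (1::complex)"
    by simp
  have "eventually (\<lambda>n. ((1 + a / of_nat n) * (1 + b / of_nat n)) / ((1 + c / of_nat n) * (1 + 1 / of_nat n))
        = (a + of_nat n) * (b + of_nat n) / ((c + of_nat n) * of_nat (Suc n))) sequentially"
    unfolding eventually_sequentially
  proof (intro exI[of _ 1] allI impI)
    fix n :: nat assume "n \<ge> 1"
    then have nz: "(of_nat n :: complex) \<noteq> 0" by simp
    have "(1 + a / of_nat n) * (1 + b / of_nat n) = (a + of_nat n) * (b + of_nat n) / (of_nat n * of_nat n)"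
      using nz by (simp add: field_simps)
    moreover have "(1 + c / of_nat n) * (1 + 1 / of_nat n) = (c + of_nat n) * of_nat (Suc n) / (of_nat n * of_nat n)"
      using nz by (simp add: field_simps)
    ultimately show "((1 + a / of_nat n) * (1 + b / of_nat n)) / ((1 + c / of_nat n) * (1 + 1 / of_nat n))
        = (a + of_nat n) * (b + of_nat n) / ((c + of_nat n) * of_nat (Suc n))"
      using nz by simp
  qed
  from tendsto_cong[OF this] l
  have "(\<lambda>n. (a + of_nat n) * (b + of_nat n) / ((c + of_nat n) * of_nat (Suc n))) \<longlonglongrightarrow> (1::complex)"
    by simp
  then show ?thesis using tendsto_norm by fastforce
qed

lemma radius_gen:
  assumes cn: "\<And>k. c + of_nat k \<noteq> 0"
  shows "fps_conv_radius (HF a b c) \<ge> 1"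
proof -
  have nd0: "nd a c" using cn by (simp add: nd_def)
  have rec: "coef a b c (Suc k) = coef a b c k * ((a + of_nat k) * (b + of_nat k) / ((c + of_nat k) * of_nat (Suc k)))" for k
  proof -
    have "(c + of_nat k) * of_nat (Suc k) \<noteq> 0" using cn[of k] ofnat_Suc_nz[of k] by simp
    then show ?thesis using coef_rec[OF nd0, of b k] by (simp add: field_simps)
  qed
  show ?thesis unfolding fps_conv_radius_def HF_def fps_nth_Abs_fps one_ereal_def
  proof (rule conv_radius_geI_ex')
    fix r :: real assume r: "0 < r" "ereal r < ereal 1"
    then have r1: "r < 1" by simp
    define q where "q = (1 + r) / 2"
    have q1: "q < 1" and rq: "r < q" using r1 by (auto simp: q_def)
    have "1 < q / r" using rq r by (simp add: field_simps)
    from order_tendstoD(2)[OF ratio_lim[of a b c] this]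
    obtain N where N: "\<And>n. n \<ge> N \<Longrightarrow> norm ((a + of_nat n) * (b + of_nat n) / ((c + of_nat n) * of_nat (Suc n))) < q / r"
      unfolding eventually_sequentially by blast
    show "summable (\<lambda>n. coef a b c n * of_real r ^ n)"
    proof (rule summable_ratio_test[OF q1])
      fix n assume "n \<ge> N"
      then have Nn: "norm ((a + of_nat n) * (b + of_nat n) / ((c + of_nat n) * of_nat (Suc n))) * r \<le> q"
        using N[of n] r by (simp add: field_simps)
      have "norm (coef a b c (Suc n) * of_real r ^ Suc n)
          = (norm ((a + of_nat n) * (b + of_nat n) / ((c + of_nat n) * of_nat (Suc n))) * r) * norm (coef a b c n * of_real r ^ n)"
      proof -
        have "coef a b c (Suc n) * of_real r ^ Suc n = ((a + of_nat n) * (b + of_nat n) / ((c + of_nat n) * of_nat (Suc n)) * of_real r) * (coef a b c n * of_real r ^ n)"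
          unfolding rec by (simp only: power_Suc mult_ac)
        then show ?thesis using r by (simp only: norm_mult norm_of_real abs_of_pos)
      qed
      also have "\<dots> \<le> q * norm (coef a b c n * of_real r ^ n)"
        by (rule mult_right_mono[OF Nn]) simp
      finally show "norm (coef a b c (Suc n) * of_real r ^ Suc n) \<le> q * norm (coef a b c n * of_real r ^ n)" .
    qed
  qed
qed

lemma rad_mult: "norm z < fps_conv_radius (f::complex fps) \<Longrightarrow> norm z < fps_conv_radius g \<Longrightarrow> norm (z::complex) < fps_conv_radius (f * g)"
  using fps_conv_radius_mult[of f g] by (meson less_le_trans min_less_iff_conj)

lemma rad_diff: "norm z < fps_conv_radius (f::complex fps) \<Longrightarrow> norm z < fps_conv_radius g \<Longrightarrow> norm (z::complex) < fps_conv_radius (f - g)"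
  using fps_conv_radius_diff[of f g] by (meson less_le_trans min_less_iff_conj)

lemma rad_deriv: "norm z < fps_conv_radius (f::complex fps) \<Longrightarrow> norm (z::complex) < fps_conv_radius (fps_deriv f)"
  using fps_conv_radius_deriv[of f] by (meson less_le_trans)

lemma final_eval:
  fixes F G H :: "complex fps"
  assumes rF: "norm z < fps_conv_radius F" and rG: "norm z < fps_conv_radius G" and rH: "norm z < fps_conv_radius H"
    and eq: "fps_X * (F * fps_deriv G - fps_deriv F * G) = fps_const c * (F*G - H^2)"
  shows "z * (eval_fps F z * eval_fps (fps_deriv G) z - eval_fps (fps_deriv F) z * eval_fps G z)
       = c * (eval_fps F z * eval_fps G z - (eval_fps H z)^2)"
proof -
  have rDF: "norm z < fps_conv_radius (fps_deriv F)" and rDG: "norm z < fps_conv_radius (fps_deriv G)"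
    using rF rG by (auto intro: rad_deriv)
  have r1: "norm z < fps_conv_radius (F * fps_deriv G)" "norm z < fps_conv_radius (fps_deriv F * G)"
    "norm z < fps_conv_radius (F * G)" "norm z < fps_conv_radius (H * H)"
    using rF rG rH rDF rDG by (auto intro: rad_mult)
  have r2: "norm z < fps_conv_radius (F * fps_deriv G - fps_deriv F * G)" "norm z < fps_conv_radius (F*G - H*H)"
    using r1 by (auto intro: rad_diff)
  have rX: "norm z < fps_conv_radius (fps_X :: complex fps)" "norm z < fps_conv_radius (fps_const c)" by simp_all
  have "eval_fps (fps_X * (F * fps_deriv G - fps_deriv F * G)) z = eval_fps (fps_const c * (F*G - H*H)) z"
    using eq by (simp add: power2_eq_square)
  then show ?thesis
    by (simp add: eval_fps_mult[OF rX(1) r2(1)] eval_fps_mult[OF rX(2) r2(2)] eval_fps_diff[OF r1(1) r1(2)]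
        eval_fps_diff[OF r1(3) r1(4)] eval_fps_mult[OF rF rDG] eval_fps_mult[OF rDF rG] eval_fps_mult[OF rF rG]
        eval_fps_mult[OF rH rH] power2_eq_square)
qed

lemma nd_term:
  assumes "a = - of_nat n" and "\<And>k::nat. k < n \<Longrightarrow> c \<noteq> - of_nat k"
  shows "nd a c"
  unfolding nd_def
proof (intro allI impI)
  fix k assume "c + of_nat k = 0"
  then have "c = - of_nat k" by (simp add: eq_neg_iff_add_eq_0)
  then have "\<not> k < n" using assms(2) by blast
  then show "pochhammer a (Suc k) = 0" unfolding assms(1) pochhammer_of_nat_eq_0_iff by simp
qed

theorem lemma5:
  fixes a b c z :: complex
  assumes hc: "c = a - b + 1"
    and hneg: "\<And>n::nat. n > 0 \<Longrightarrow> a = - of_nat n \<Longrightarrow>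
                 (\<forall>k::int. - int n \<le> k \<and> k \<le> 1 \<longrightarrow> c \<noteq> of_int k)"
    and hgen: "\<not> (\<exists>n::nat. n > 0 \<and> a = - of_nat n) \<Longrightarrow>
                 (\<forall>m::nat. m \<ge> 1 \<longrightarrow> 2 - c \<noteq> of_nat m)"
    and hz: "(\<exists>n::nat. n > 0 \<and> a = - of_nat n) \<or> norm z < 1"
  shows "z * (hyp2F1 a (b+1) (c+1) z * deriv (hyp2F1 a (b-1) (c-1)) z
              - deriv (hyp2F1 a (b+1) (c+1)) z * hyp2F1 a (b-1) (c-1) z)
         = c * (hyp2F1 a (b+1) (c+1) z * hyp2F1 a (b-1) (c-1) z - (hyp2F1 a b c z)\<^sup>2)"
proof -
  have hb: "b = a - c + 1" using hc by simp
  have main: "c \<noteq> 0 \<and> c \<noteq> 1 \<and> nd a (c-1) \<and> nd a c \<and> nd a (c+1) \<and>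
     norm z < fps_conv_radius (HF a (b+1) (c+1)) \<and> norm z < fps_conv_radius (HF a (b-1) (c-1))
     \<and> norm z < fps_conv_radius (HF a b c)"
  proof (cases "\<exists>n::nat. n > 0 \<and> a = - of_nat n")
    case True
    then obtain n :: nat where n: "n > 0" "a = - of_nat n" by blast
    have K: "c \<noteq> of_int k" if "- int n \<le> k" "k \<le> 1" for k using hneg[OF n] that by blast
    have c0: "c \<noteq> 0" using K[of 0] by simp
    have c1: "c \<noteq> 1" using K[of 1] by simp
    have ndm: "nd a (c-1)"
    proof (rule nd_term[OF n(2)])
      fix k :: nat assume "k < n"
      then have "c \<noteq> of_int (1 - int k)" by (intro K) auto
      then show "c - 1 \<noteq> - of_nat k" by (auto simp: algebra_simps)
    qed
    have nd0: "nd a c"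
    proof (rule nd_term[OF n(2)])
      fix k :: nat assume "k < n"
      then have "c \<noteq> of_int (- int k)" by (intro K) auto
      then show "c \<noteq> - of_nat k" by simp
    qed
    have ndp: "nd a (c+1)"
    proof (rule nd_term[OF n(2)])
      fix k :: nat assume "k < n"
      then have "c \<noteq> of_int (- int k - 1)" by (intro K) auto
      then show "c + 1 \<noteq> - of_nat k" by (auto simp: algebra_simps)
    qed
    have pz: "\<And>k. k > n \<Longrightarrow> pochhammer a k = 0" unfolding n(2) pochhammer_of_nat_eq_0_iff by simp
    show ?thesis using c0 c1 ndm nd0 ndp radius_term[OF pz] by simp
  next
    case False
    have M: "2 - c \<noteq> of_nat m" if "m \<ge> 1" for m using hgen[OF False] that by blast
    have cn: "c - 1 + of_nat k \<noteq> 0" "c + of_nat k \<noteq> 0" "c + 1 + of_nat k \<noteq> 0" for k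
    proof -
      show "c - 1 + of_nat k \<noteq> 0" using M[of "1+k"] by (auto simp: algebra_simps)
      show "c + of_nat k \<noteq> 0" using M[of "2+k"] by (auto simp: algebra_simps)
      show "c + 1 + of_nat k \<noteq> 0" using M[of "3+k"] by (auto simp: algebra_simps)
    qed
    have c0: "c \<noteq> 0" using cn(2)[of 0] by simp
    have c1: "c \<noteq> 1" using cn(1)[of 0] by simp
    have nds: "nd a (c-1)" "nd a c" "nd a (c+1)" using cn by (auto simp: nd_def)
    have z1: "norm z < 1" using hz False by blast
    have "ereal (norm z) < 1" using z1 by simp
    then have "norm z < fps_conv_radius (HF a (b+1) (c+1))" "norm z < fps_conv_radius (HF a (b-1) (c-1))"
      "norm z < fps_conv_radius (HF a b c)"
      using radius_gen[OF cn(3)] radius_gen[OF cn(1)] radius_gen[OF cn(2)]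
      by (meson less_le_trans)+
    then show ?thesis using c0 c1 nds by simp
  qed
  have eq: "fps_X * (HF a (b+1) (c+1) * fps_deriv (HF a (b-1) (c-1)) - fps_deriv (HF a (b+1) (c+1)) * HF a (b-1) (c-1))
       = fps_const c * (HF a (b+1) (c+1) * HF a (b-1) (c-1) - (HF a b c)^2)"
    using fps_main[OF _ _ _ _ _ hb] main by blast
  have d1: "deriv (hyp2F1 a (b+1) (c+1)) z = eval_fps (fps_deriv (HF a (b+1) (c+1))) z"
    unfolding hyp_eval using main by (simp add: eval_fps_deriv)
  have d2: "deriv (hyp2F1 a (b-1) (c-1)) z = eval_fps (fps_deriv (HF a (b-1) (c-1))) z"
    unfolding hyp_eval using main by (simp add: eval_fps_deriv)
  show ?thesis unfolding d1 d2 unfolding hyp_eval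
    using final_eval[OF _ _ _ eq] main by blast
qed

end
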